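(* Let $x\in\{0,1\}^\infty$ have randomness rate $\tau$ for some constant $\tau>0$, and let $0<\sigma<\tau$. Then for every sufficiently large $n_0$ there is $n_1>n_0$ such that \[K(x(n_0+1:n_1)\mid x(1:n_0))>\sigma(n_1-n_0).\] Furthermore, there is an effective procedure that on input $n_0,\tau,\sigma$ computes such an $n_1$.
   Context: $x(n_1:n_2)$ denotes the substring of bits $n_1$ through $n_2$ of $x$ (bits indexed from 1). $K(u)$ is plain Kolmogorov complexity with respect to a fixed universal machine, and $K(u\mid v)=\min\{|p|: U(p,v)=u\}$ is conditional plain Kolmogorov complexity with respect to a fixed universal conditional machine $U$. A sequence $x$ has randomness rate $\sigma$ if $K(x(1:n))\ge\sigma n$ for all but finitely many $n$. *)

theory Defs
  imports Complex_Main
begin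

datatype recf = Z | S | Id nat | Cn recf "recf list" | Pr recf recf | Mn recf

inductive eval :: "recf \<Rightarrow> nat list \<Rightarrow> nat \<Rightarrow> bool" where
  eval_Z: "eval Z xs 0"
| eval_S: "eval S (x # xs) (Suc x)"
| eval_Id: "i < length xs \<Longrightarrow> eval (Id i) xs (xs ! i)"
| eval_Cn: "length ys = length gs \<Longrightarrow> (\<forall>i<length gs. eval (gs ! i) xs (ys ! i))
             \<Longrightarrow> eval f ys z \<Longrightarrow> eval (Cn f gs) xs z"
| eval_Pr0: "eval f xs y \<Longrightarrow> eval (Pr f g) (0 # xs) y"
| eval_PrS: "eval (Pr f g) (n # xs) y \<Longrightarrow> eval g (n # y # xs) z
             \<Longrightarrow> eval (Pr f g) (Suc n # xs) z"
| eval_Mn: "eval f (n # xs) 0 \<Longrightarrow> (\<forall>m<n. \<exists>k. eval f (m # xs) (Suc k))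
             \<Longrightarrow> eval (Mn f) xs n"

text \<open>Bijective encoding of binary strings (bool lists) as natural numbers.\<close>
fun enc :: "bool list \<Rightarrow> nat" where
  "enc [] = 0"
| "enc (b # bs) = (if b then 2 else 1) + 2 * enc bs"

definition computable1 :: "(bool list \<Rightarrow> bool list option) \<Rightarrow> bool" where
  "computable1 M \<longleftrightarrow> (\<exists>f. \<forall>p y. eval f [enc p] y \<longleftrightarrow> (\<exists>u. M p = Some u \<and> y = enc u))"

definition computable2 :: "(bool list \<Rightarrow> bool list \<Rightarrow> bool list option) \<Rightarrow> bool" where
  "computable2 M \<longleftrightarrow>
     (\<exists>f. \<forall>p v y. eval f [enc p, enc v] y \<longleftrightarrow> (\<exists>u. M p v = Some u \<and> y = enc u))"

definition universal1 :: "(bool list \<Rightarrow> bool list option) \<Rightarrow> bool" where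
  "universal1 U \<longleftrightarrow> computable1 U \<and>
     (\<forall>M. computable1 M \<longrightarrow> (\<exists>c. \<forall>p u. M p = Some u \<longrightarrow>
        (\<exists>q. U q = Some u \<and> length q \<le> length p + c)))"

definition universal2 :: "(bool list \<Rightarrow> bool list \<Rightarrow> bool list option) \<Rightarrow> bool" where
  "universal2 U \<longleftrightarrow> computable2 U \<and>
     (\<forall>M. computable2 M \<longrightarrow> (\<exists>c. \<forall>p v u. M p v = Some u \<longrightarrow>
        (\<exists>q. U q v = Some u \<and> length q \<le> length p + c)))"

definition KC :: "(bool list \<Rightarrow> bool list option) \<Rightarrow> bool list \<Rightarrow> nat" where
  "KC U u = (LEAST n. \<exists>p. length p = n \<and> U p = Some u)"

definition KCond :: "(bool list \<Rightarrow> bool list \<Rightarrow> bool list option) \<Rightarrow> bool list \<Rightarrow> bool list \<Rightarrow> nat" where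
  "KCond U u v = (LEAST n. \<exists>p. length p = n \<and> U p v = Some u)"

text \<open>Infinite binary sequences are x :: nat => bool, where bit number k
  (bits indexed from 1) is x (k - 1).  seg x n1 n2 is x(n1:n2).\<close>
definition seg :: "(nat \<Rightarrow> bool) \<Rightarrow> nat \<Rightarrow> nat \<Rightarrow> bool list" where
  "seg x n1 n2 = map (\<lambda>k. x (k - 1)) [n1..<Suc n2]"

definition has_rate :: "(bool list \<Rightarrow> bool list option) \<Rightarrow> (nat \<Rightarrow> bool) \<Rightarrow> real \<Rightarrow> bool" where
  "has_rate U x \<sigma> \<longleftrightarrow> (\<forall>\<^sub>F n in sequentially. real (KC U (seg x 1 n)) \<ge> \<sigma> * real n)"

end

theory Submission
  imports Defs
begin

lemma eval_Z_iff[simp]: "eval Z xs y \<longleftrightarrow> y = 0"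
  by (auto elim: eval.cases intro: eval.intros)
lemma eval_S_iff: "eval S xs y \<longleftrightarrow> (\<exists>a ys. xs = a # ys \<and> y = Suc a)"
  by (auto elim: eval.cases intro: eval.intros)
lemma eval_Id_iff[simp]: "eval (Id i) xs y \<longleftrightarrow> i < length xs \<and> y = xs ! i"
  by (auto elim: eval.cases intro: eval.intros)
lemma eval_Cn_iff: "eval (Cn f gs) xs z \<longleftrightarrow>
   (\<exists>ys. length ys = length gs \<and> (\<forall>i<length gs. eval (gs ! i) xs (ys ! i)) \<and> eval f ys z)"
  by (auto elim: eval.cases intro: eval.intros)
lemma eval_Pr0_iff: "eval (Pr f g) (0 # xs) y \<longleftrightarrow> eval f xs y"
  by (auto elim: eval.cases intro: eval.intros)
lemma eval_PrS_iff: "eval (Pr f g) (Suc n # xs) z \<longleftrightarrow> (\<exists>y. eval (Pr f g) (n # xs) y \<and> eval g (n # y # xs) z)"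
  by (auto elim: eval.cases intro: eval.intros)
lemma eval_Mn_iff: "eval (Mn f) xs n \<longleftrightarrow> eval f (n # xs) 0 \<and> (\<forall>m<n. \<exists>k. eval f (m # xs) (Suc k))"
  by (auto elim: eval.cases intro: eval.intros)

lemma eval_Cn2: "eval (Cn f [g1, g2]) xs z \<longleftrightarrow> (\<exists>a b. eval g1 xs a \<and> eval g2 xs b \<and> eval f [a, b] z)"
  unfolding eval_Cn_iff
proof safe
  fix ys assume "length ys = length [g1, g2]" "\<forall>i<length [g1, g2]. eval ([g1, g2] ! i) xs (ys ! i)" "eval f ys z"
  then show "\<exists>a b. eval g1 xs a \<and> eval g2 xs b \<and> eval f [a, b] z"
    by (auto simp: length_Suc_conv less_Suc_eq) blast
next
  fix a b assume "eval g1 xs a" "eval g2 xs b" "eval f [a, b] z"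
  then show "\<exists>ys. length ys = length [g1, g2] \<and> (\<forall>i<length [g1, g2]. eval ([g1, g2] ! i) xs (ys ! i)) \<and> eval f ys z"
    by (intro exI[of _ "[a,b]"]) (auto simp: less_Suc_eq)
qed

definition tot :: "nat \<Rightarrow> recf \<Rightarrow> (nat list \<Rightarrow> nat) \<Rightarrow> bool" where
  "tot k f h \<longleftrightarrow> (\<forall>xs y. length xs = k \<longrightarrow> (eval f xs y \<longleftrightarrow> y = h xs))"

lemma totD: "tot k f h \<Longrightarrow> length xs = k \<Longrightarrow> eval f xs y \<longleftrightarrow> y = h xs"
  by (simp add: tot_def)

lemma tot_Z: "tot k Z (\<lambda>_. 0)" by (simp add: tot_def)
lemma tot_S: "tot 1 S (\<lambda>xs. Suc (xs!0))"
  unfolding tot_def eval_S_iff by (auto simp: length_Suc_conv)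
lemma tot_Id: "i < k \<Longrightarrow> tot k (Id i) (\<lambda>xs. xs ! i)" by (simp add: tot_def)

lemma tot_Cn_aux:
  assumes "tot m f h" "length gs = m" "length hs = m" "\<forall>i<m. tot k (gs!i) (hs!i)"
    and "\<forall>xs. length xs = k \<longrightarrow> H xs = h (map (\<lambda>h'. h' xs) hs)"
  shows "tot k (Cn f gs) H"
  unfolding tot_def
proof (intro allI impI)
  fix xs :: "nat list" and y assume l: "length xs = k"
  have "(\<forall>i<length gs. eval (gs ! i) xs (ys ! i)) \<longleftrightarrow> (\<forall>i<m. ys ! i = (hs!i) xs)" for ys
    using assms(2,4) l by (auto simp: tot_def)
  then have "eval (Cn f gs) xs y \<longleftrightarrow> (\<exists>ys. length ys = m \<and> (\<forall>i<m. ys ! i = (hs!i) xs) \<and> eval f ys y)"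
    unfolding eval_Cn_iff using assms(2) by auto
  also have "\<dots> \<longleftrightarrow> eval f (map (\<lambda>h'. h' xs) hs) y"
  proof
    assume "\<exists>ys. length ys = m \<and> (\<forall>i<m. ys ! i = (hs!i) xs) \<and> eval f ys y"
    then obtain ys where "length ys = m" "\<forall>i<m. ys ! i = (hs!i) xs" "eval f ys y" by auto
    moreover have "ys = map (\<lambda>h'. h' xs) hs"
      using calculation assms(3) by (intro nth_equalityI) auto
    ultimately show "eval f (map (\<lambda>h'. h' xs) hs) y" by simp
  qed (use assms(3) in \<open>auto intro!: exI[of _ "map (\<lambda>h'. h' xs) hs"]\<close>)
  also have "\<dots> \<longleftrightarrow> y = H xs" using assms(1,3,5) l by (simp add: tot_def)
  finally show "eval (Cn f gs) xs y \<longleftrightarrow> y = H xs" .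
qed

fun prrec :: "(nat list \<Rightarrow> nat) \<Rightarrow> (nat list \<Rightarrow> nat) \<Rightarrow> nat \<Rightarrow> nat list \<Rightarrow> nat" where
  "prrec h h' 0 ys = h ys"
| "prrec h h' (Suc n) ys = h' (n # prrec h h' n ys # ys)"

lemma tot_Pr_aux:
  assumes "tot k f h" "tot (Suc (Suc k)) g h'"
    and "\<forall>n ys. length ys = k \<longrightarrow> H (n # ys) = prrec h h' n ys"
  shows "tot (Suc k) (Pr f g) H"
  unfolding tot_def
proof (intro allI impI)
  fix xs :: "nat list" and y assume "length xs = Suc k"
  then obtain n ys where xs: "xs = n # ys" and l: "length ys = k" by (auto simp: length_Suc_conv)
  have "eval (Pr f g) (n # ys) y \<longleftrightarrow> y = prrec h h' n ys" for y
  proof (induction n arbitrary: y)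
    case 0 then show ?case using assms(1) l by (simp add: eval_Pr0_iff tot_def)
  next
    case (Suc n) then show ?case using assms(2) l by (simp add: eval_PrS_iff tot_def)
  qed
  then show "eval (Pr f g) xs y \<longleftrightarrow> y = H xs" using assms(3) l xs by simp
qed

lemma tot_Mn:
  assumes "tot (Suc k) f h" "\<forall>xs. length xs = k \<longrightarrow> (\<exists>i. h (i # xs) = 0)"
    and "\<forall>xs. length xs = k \<longrightarrow> H xs = (LEAST i. h (i # xs) = 0)"
  shows "tot k (Mn f) H"
  unfolding tot_def
proof (intro allI impI)
  fix xs :: "nat list" and y assume l: "length xs = k"
  have e: "eval f (i # xs) z \<longleftrightarrow> z = h (i # xs)" for i z using assms(1) l by (simp add: tot_def)
  have "eval (Mn f) xs y \<longleftrightarrow> h (y # xs) = 0 \<and> (\<forall>m<y. h (m # xs) \<noteq> 0)"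
    unfolding eval_Mn_iff e by (auto, metis gr0_implies_Suc)
  also have "\<dots> \<longleftrightarrow> y = (LEAST i. h (i # xs) = 0)"
  proof
    assume "h (y # xs) = 0 \<and> (\<forall>m<y. h (m # xs) \<noteq> 0)"
    then show "y = (LEAST i. h (i # xs) = 0)"
      by (intro Least_equality[symmetric]) (auto simp: not_less[symmetric])
  next
    assume y: "y = (LEAST i. h (i # xs) = 0)"
    obtain i where "h (i # xs) = 0" using assms(2) l by auto
    then show "h (y # xs) = 0 \<and> (\<forall>m<y. h (m # xs) \<noteq> 0)"
      unfolding y by (metis (mono_tags, lifting) LeastI not_less_Least)
  qed
  finally show "eval (Mn f) xs y \<longleftrightarrow> y = H xs" using assms(3) l by simp
qed

lemma tot_Cn:
  assumes "tot m f h" "length gs = m" "list_all2 (tot k) gs hs"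
    and "\<forall>xs. length xs = k \<longrightarrow> H xs = h (map (\<lambda>h'. h' xs) hs)"
  shows "tot k (Cn f gs) H"
  using tot_Cn_aux[of m f h gs hs k H] assms by (auto simp: list_all2_conv_all_nth)

lemma tot_Pr:
  assumes "tot k f h" "tot k2 g h'" "\<forall>n ys. length ys = k \<longrightarrow> H (n # ys) = prrec h h' n ys"
   "k1 = Suc k" "k2 = Suc k1"
  shows "tot k1 (Pr f g) H"
  using tot_Pr_aux[of k f h g h' H] assms by simp

definition "ONE = Cn S [Z]"
definition "PRED = Pr Z (Id 0)"
definition "ADD = Pr (Id 0) (Cn S [Id 1])"
definition "MULT = Pr Z (Cn ADD [Id 1, Id 2])"
definition "SUB = Pr (Id 0) (Cn PRED [Id 1])"
definition "MOD2 = Pr Z (Cn SUB [Id 1, ONE])"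
definition "DIV2 = Pr Z (Cn ADD [Id 1, Cn MOD2 [Id 0]])"
definition "TL = Cn DIV2 [Cn PRED [Id 0]]"
definition "POW2 = Pr ONE (Cn ADD [Id 1, Id 1])"
definition "ITER = Pr (Id 0) (Cn TL [Id 1])"
definition "HV = Cn MULT [Cn SUB [Cn MOD2 [Id 0], ONE], Id 0]"

definition tlf :: "nat \<Rightarrow> nat" where "tlf n = (n - 1) div 2"
definition itf :: "nat \<Rightarrow> nat \<Rightarrow> nat" where "itf i n = (tlf ^^ i) n"
definition hv :: "nat \<Rightarrow> nat" where "hv n = (1 - n mod 2) * n"

lemma tot_ONE: "tot k ONE (\<lambda>_. 1)"
  unfolding ONE_def by (rule tot_Cn[OF tot_S, where hs="[\<lambda>_. 0]"]) (auto simp: tot_Z)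

lemma tot_PRED: "tot 1 PRED (\<lambda>xs. xs!0 - 1)"
  unfolding PRED_def
  by (rule tot_Pr[where k=0, OF tot_Z tot_Id]) (auto, case_tac n, auto)

lemma tot_ADD: "tot 2 ADD (\<lambda>xs. xs!0 + xs!1)"
proof -
  have g: "tot 3 (Cn S [Id 1]) (\<lambda>xs. Suc (xs!1))"
    by (rule tot_Cn[OF tot_S, where hs="[\<lambda>xs. xs!1]"]) (auto simp: tot_Id)
  have "prrec (\<lambda>xs. xs ! 0) (\<lambda>xs. Suc (xs!1)) n [b] = n + b" for n b by (induction n) auto
  then show ?thesis unfolding ADD_def
    by (intro tot_Pr[where k=1, OF tot_Id g]) (auto simp: length_Suc_conv)
qed

lemma tot_MULT: "tot 2 MULT (\<lambda>xs. xs!0 * xs!1)"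
proof -
  have g: "tot 3 (Cn ADD [Id 1, Id 2]) (\<lambda>xs. xs!1 + xs!2)"
    by (rule tot_Cn[OF tot_ADD, where hs="[\<lambda>xs. xs!1, \<lambda>xs. xs!2]"]) (auto simp: tot_Id)
  have "prrec (\<lambda>_. 0) (\<lambda>xs. xs!1 + xs!2) n [b] = n * b" for n b by (induction n) auto
  then show ?thesis unfolding MULT_def
    by (intro tot_Pr[where k=1, OF tot_Z g]) (auto simp: length_Suc_conv)
qed

lemma tot_SUB: "tot 2 SUB (\<lambda>xs. xs!1 - xs!0)"
proof -
  have g: "tot 3 (Cn PRED [Id 1]) (\<lambda>xs. xs!1 - 1)"
    by (rule tot_Cn[OF tot_PRED, where hs="[\<lambda>xs. xs!1]"]) (auto simp: tot_Id)
  have "prrec (\<lambda>xs. xs ! 0) (\<lambda>xs. xs!1 - 1) n [b] = b - n" for n b by (induction n) auto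
  then show ?thesis unfolding SUB_def
    by (intro tot_Pr[where k=1, OF tot_Id g]) (auto simp: length_Suc_conv)
qed

lemma tot_MOD2: "tot 1 MOD2 (\<lambda>xs. xs!0 mod 2)"
proof -
  have g: "tot 2 (Cn SUB [Id 1, ONE]) (\<lambda>xs. 1 - xs!1)"
    by (rule tot_Cn[OF tot_SUB, where hs="[\<lambda>xs. xs!1, \<lambda>_. 1]"]) (auto simp: tot_Id tot_ONE[simplified])
  have "prrec (\<lambda>_. 0) (\<lambda>xs. 1 - xs!1) n [] = n mod 2" for n by (induction n) (auto simp: mod_Suc)
  then show ?thesis unfolding MOD2_def
    by (intro tot_Pr[where k=0, OF tot_Z g]) auto
qed

lemma tot_DIV2: "tot 1 DIV2 (\<lambda>xs. xs!0 div 2)"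
proof -
  have m: "tot 2 (Cn MOD2 [Id 0]) (\<lambda>xs. xs!0 mod 2)"
    by (rule tot_Cn[OF tot_MOD2, where hs="[\<lambda>xs. xs!0]"]) (auto simp: tot_Id)
  have g: "tot 2 (Cn ADD [Id 1, Cn MOD2 [Id 0]]) (\<lambda>xs. xs!1 + xs!0 mod 2)"
    by (rule tot_Cn[OF tot_ADD, where hs="[\<lambda>xs. xs!1, \<lambda>xs. xs!0 mod 2]"]) (auto simp: tot_Id m)
  have "prrec (\<lambda>_. 0) (\<lambda>xs. xs!1 + xs!0 mod 2) n [] = n div 2" for n
    by (induction n) (auto, presburger)
  then show ?thesis unfolding DIV2_def
    by (intro tot_Pr[where k=0, OF tot_Z g]) auto
qed

lemma tot_TL: "tot 1 TL (\<lambda>xs. tlf (xs!0))"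
proof -
  have p: "tot 1 (Cn PRED [Id 0]) (\<lambda>xs. xs!0 - 1)"
    by (rule tot_Cn[OF tot_PRED, where hs="[\<lambda>xs. xs!0]"]) (auto simp: tot_Id)
  show ?thesis unfolding TL_def
    by (rule tot_Cn[OF tot_DIV2, where hs="[\<lambda>xs. xs!0 - 1]"]) (auto simp: p[simplified] tlf_def)
qed

lemma tot_POW2: "tot 1 POW2 (\<lambda>xs. 2 ^ (xs!0))"
proof -
  have g: "tot 2 (Cn ADD [Id 1, Id 1]) (\<lambda>xs. xs!1 + xs!1)"
    by (rule tot_Cn[OF tot_ADD, where hs="[\<lambda>xs. xs!1, \<lambda>xs. xs!1]"]) (auto simp: tot_Id)
  have "prrec (\<lambda>_. 1) (\<lambda>xs. xs!1 + xs!1) n [] = 2 ^ n" for n by (induction n) auto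
  then show ?thesis unfolding POW2_def
    by (intro tot_Pr[where k=0, OF tot_ONE g]) auto
qed

lemma tot_ITER: "tot 2 ITER (\<lambda>xs. itf (xs!0) (xs!1))"
proof -
  have g: "tot 3 (Cn TL [Id 1]) (\<lambda>xs. tlf (xs!1))"
    by (rule tot_Cn[OF tot_TL, where hs="[\<lambda>xs. xs!1]"]) (auto simp: tot_Id)
  have "prrec (\<lambda>xs. xs ! 0) (\<lambda>xs. tlf (xs!1)) n [b] = itf n b" for n b by (induction n) (auto simp: itf_def)
  then show ?thesis unfolding ITER_def
    by (intro tot_Pr[where k=1, OF tot_Id g]) (auto simp: length_Suc_conv)
qed

lemma tot_HV: "tot 1 HV (\<lambda>xs. hv (xs!0))"
proof -
  have m: "tot 1 (Cn MOD2 [Id 0]) (\<lambda>xs. xs!0 mod 2)"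
    by (rule tot_Cn[OF tot_MOD2, where hs="[\<lambda>xs. xs!0]"]) (auto simp: tot_Id)
  have s: "tot 1 (Cn SUB [Cn MOD2 [Id 0], ONE]) (\<lambda>xs. 1 - xs!0 mod 2)"
    by (rule tot_Cn[OF tot_SUB, where hs="[\<lambda>xs. xs!0 mod 2, \<lambda>_. 1]"]) (auto simp: m[simplified] tot_ONE[simplified])
  show ?thesis unfolding HV_def
    by (rule tot_Cn[OF tot_MULT, where hs="[\<lambda>xs. 1 - xs!0 mod 2, \<lambda>xs. xs!0]"]) (auto simp: s[simplified] tot_Id hv_def)
qed

lemma tot_Mn':
  assumes "tot k1 f h" "k1 = Suc k" "\<forall>xs. length xs = k \<longrightarrow> (\<exists>i. h (i # xs) = 0)"
    and "\<forall>xs. length xs = k \<longrightarrow> H xs = (LEAST i. h (i # xs) = 0)"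
  shows "tot k (Mn f) H"
  using tot_Mn[of k f h H] assms by simp

definition mfun :: "nat \<Rightarrow> nat" where "mfun n = (LEAST i. hv (itf i n) = 0)"
definition restf :: "nat \<Rightarrow> nat" where "restf n = itf (Suc (mfun n)) n"
definition qnf :: "nat \<Rightarrow> nat" where "qnf n = itf (mfun n) (restf n)"
definition vnf :: "nat \<Rightarrow> nat" where "vnf n = restf n - 2 ^ mfun n * qnf n"

lemma itf_le: "itf i n \<le> n - i"
proof (induction i)
  case 0 then show ?case by (simp add: itf_def)
next
  case (Suc i)
  have "itf (Suc i) n = tlf (itf i n)" by (simp add: itf_def)
  also have "\<dots> \<le> itf i n - 1" by (simp add: tlf_def)
  finally show ?case using Suc by linarith
qed

lemma mfun_ex: "\<exists>i. hv (itf i n) = 0"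
proof -
  have "itf n n = 0" using itf_le[of n n] by simp
  then show ?thesis by (intro exI[of _ n]) (simp add: hv_def)
qed

definition "MF = Mn (Cn HV [ITER])"
definition "REST = Cn ITER [Cn S [MF], Id 0]"
definition "QN = Cn ITER [MF, REST]"
definition "VN = Cn SUB [Cn MULT [Cn POW2 [MF], QN], REST]"
definition "OUT = Cn ADD [Cn VN [Id 0], Cn MULT [Cn POW2 [Cn MF [Id 0]], Id 1]]"

lemma tot_MF: "tot 1 MF (\<lambda>xs. mfun (xs!0))"
proof -
  have i: "tot 2 (Cn HV [ITER]) (\<lambda>xs. hv (itf (xs!0) (xs!1)))"
    by (rule tot_Cn[OF tot_HV, where hs="[\<lambda>xs. itf (xs!0) (xs!1)]"]) (auto simp: tot_ITER[simplified])
  show ?thesis unfolding MF_def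
    by (rule tot_Mn'[OF i, where k=1]) (auto simp: mfun_def mfun_ex length_Suc_conv)
qed

lemma tot_REST: "tot 1 REST (\<lambda>xs. restf (xs!0))"
proof -
  have s: "tot 1 (Cn S [MF]) (\<lambda>xs. Suc (mfun (xs!0)))"
    by (rule tot_Cn[OF tot_S, where hs="[\<lambda>xs. mfun (xs!0)]"]) (auto simp: tot_MF[simplified])
  show ?thesis unfolding REST_def
    by (rule tot_Cn[OF tot_ITER, where hs="[\<lambda>xs. Suc (mfun (xs!0)), \<lambda>xs. xs!0]"])
      (auto simp: s[simplified] tot_Id restf_def)
qed

lemma tot_QN: "tot 1 QN (\<lambda>xs. qnf (xs!0))"
  unfolding QN_def
  by (rule tot_Cn[OF tot_ITER, where hs="[\<lambda>xs. mfun (xs!0), \<lambda>xs. restf (xs!0)]"])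
      (auto simp: tot_MF[simplified] tot_REST[simplified] qnf_def)

lemma tot_VN: "tot 1 VN (\<lambda>xs. vnf (xs!0))"
proof -
  have p: "tot 1 (Cn POW2 [MF]) (\<lambda>xs. 2 ^ mfun (xs!0))"
    by (rule tot_Cn[OF tot_POW2, where hs="[\<lambda>xs. mfun (xs!0)]"]) (auto simp: tot_MF[simplified])
  have m: "tot 1 (Cn MULT [Cn POW2 [MF], QN]) (\<lambda>xs. 2 ^ mfun (xs!0) * qnf (xs!0))"
    by (rule tot_Cn[OF tot_MULT, where hs="[\<lambda>xs. 2 ^ mfun (xs!0), \<lambda>xs. qnf (xs!0)]"])
      (auto simp: p[simplified] tot_QN[simplified])
  show ?thesis unfolding VN_def
    by (rule tot_Cn[OF tot_SUB, where hs="[\<lambda>xs. 2 ^ mfun (xs!0) * qnf (xs!0), \<lambda>xs. restf (xs!0)]"])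
      (auto simp: m[simplified] tot_REST[simplified] vnf_def)
qed

lemma tot_OUT: "tot 2 OUT (\<lambda>xs. vnf (xs!0) + 2 ^ mfun (xs!0) * xs!1)"
proof -
  have v: "tot 2 (Cn VN [Id 0]) (\<lambda>xs. vnf (xs!0))"
    by (rule tot_Cn[OF tot_VN, where hs="[\<lambda>xs. xs!0]"]) (auto simp: tot_Id)
  have f: "tot 2 (Cn MF [Id 0]) (\<lambda>xs. mfun (xs!0))"
    by (rule tot_Cn[OF tot_MF, where hs="[\<lambda>xs. xs!0]"]) (auto simp: tot_Id)
  have p: "tot 2 (Cn POW2 [Cn MF [Id 0]]) (\<lambda>xs. 2 ^ mfun (xs!0))"
    by (rule tot_Cn[OF tot_POW2, where hs="[\<lambda>xs. mfun (xs!0)]"]) (auto simp: f)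
  have m: "tot 2 (Cn MULT [Cn POW2 [Cn MF [Id 0]], Id 1]) (\<lambda>xs. 2 ^ mfun (xs!0) * xs!1)"
    by (rule tot_Cn[OF tot_MULT, where hs="[\<lambda>xs. 2 ^ mfun (xs!0), \<lambda>xs. xs!1]"])
      (auto simp: p tot_Id)
  show ?thesis unfolding OUT_def
    by (rule tot_Cn[OF tot_ADD, where hs="[\<lambda>xs. vnf (xs!0), \<lambda>xs. 2 ^ mfun (xs!0) * xs!1]"])
      (auto simp: v m[simplified])
qed

lemma tlf_enc: "tlf (enc xs) = enc (tl xs)"
  by (cases xs) (auto simp: tlf_def)

lemma itf_enc: "itf i (enc xs) = enc (drop i xs)"
  by (induction i) (auto simp: itf_def tlf_enc drop_Suc tl_drop)

lemma hv_enc: "hv (enc xs) = 0 \<longleftrightarrow> (xs = [] \<or> \<not> hd xs)"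
  by (cases xs) (auto simp: hv_def)

lemma enc_split: "enc xs = enc (take m xs) + 2 ^ m * enc (drop m xs)"
proof (induction xs arbitrary: m)
  case Nil then show ?case by simp
next
  case (Cons b bs)
  show ?case
  proof (cases m)
    case (Suc m')
    have "enc bs = enc (take m' bs) + 2 ^ m' * enc (drop m' bs)" by (rule Cons)
    then show ?thesis using Suc by (simp add: algebra_simps)
  qed simp
qed

lemma enc_append: "enc (xs @ ys) = enc xs + 2 ^ length xs * enc ys"
  using enc_split[of "xs @ ys" "length xs"] by simp

lemma enc_inj: "inj enc"
proof (rule injI)
  fix xs ys show "enc xs = enc ys \<Longrightarrow> xs = ys"
  proof (induction xs arbitrary: ys)
    case Nil then show ?case by (cases ys) (auto split: if_splits)
  next
    case (Cons a xs)
    then show ?case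
      by (cases ys) (auto split: if_splits, presburger+)
  qed
qed

lemma enc_surj: "\<exists>xs. enc xs = n"
proof (induction n rule: less_induct)
  case (less n)
  show ?case
  proof (cases "n = 0")
    case True then show ?thesis by (intro exI[of _ "[]"]) simp
  next
    case False
    show ?thesis
    proof (cases "even n")
      case True
      then obtain m where m: "n = 2 * m" by (auto elim: evenE)
      define k where "k = m - 1"
      have k: "n = 2 + 2 * k" using m False unfolding k_def by simp
      then obtain xs where "enc xs = k" using less by fastforce
      then show ?thesis using k by (intro exI[of _ "True # xs"]) simp
    next
      case odd: False
      then obtain k where k: "n = 1 + 2 * k" by (auto elim: oddE)
      then obtain xs where "enc xs = k" using less by fastforce
      then show ?thesis using k by (intro exI[of _ "False # xs"]) simp
    qed
  qed
qed

definition dec :: "nat \<Rightarrow> bool list" where "dec = inv enc"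

lemma enc_dec[simp]: "enc (dec n) = n"
  unfolding dec_def by (metis enc_surj f_inv_into_f rangeI)

lemma dec_enc[simp]: "dec (enc xs) = xs"
  unfolding dec_def by (simp add: enc_inj)

lemma mfun_code: "mfun (enc (replicate m True @ False # r)) = m"
  unfolding mfun_def
proof (rule Least_equality)
  show "hv (itf m (enc (replicate m True @ False # r))) = 0"
    unfolding itf_enc by (simp add: hv_def)
next
  fix y assume "hv (itf y (enc (replicate m True @ False # r))) = 0"
  then show "m \<le> y"
  proof (rule contrapos_pp)
    assume "\<not> m \<le> y"
    then have "drop y (replicate m True @ False # r) = replicate (m - y) True @ False # r" by simp
    moreover have "m - y > 0" using \<open>\<not> m \<le> y\<close> by simp
    ultimately show "hv (itf y (enc (replicate m True @ False # r))) \<noteq> 0"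
      unfolding itf_enc by (cases "m - y") (auto simp: hv_def)
  qed
qed

lemma code_facts:
  assumes "length v = m"
  shows "mfun (enc (replicate m True @ False # v @ q)) = m"
    and "qnf (enc (replicate m True @ False # v @ q)) = enc q"
    and "vnf (enc (replicate m True @ False # v @ q)) = enc v"
proof -
  let ?p = "replicate m True @ False # v @ q"
  show m: "mfun (enc ?p) = m" by (rule mfun_code)
  have r: "restf (enc ?p) = enc (v @ q)" unfolding restf_def m itf_enc
    by (simp add: drop_Suc)
  show q: "qnf (enc ?p) = enc q" unfolding qnf_def m r itf_enc using assms by simp
  have "enc (v @ q) - 2 ^ m * enc q = enc v" using assms by (simp add: enc_append)
  then show "vnf (enc ?p) = enc v" unfolding vnf_def m r q .
qed

definition Mach :: "(bool list \<Rightarrow> bool list \<Rightarrow> bool list option) \<Rightarrow> bool list \<Rightarrow> bool list option" where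
  "Mach U p = (case U (dec (qnf (enc p))) (dec (vnf (enc p))) of None \<Rightarrow> None
      | Some w \<Rightarrow> Some (dec (vnf (enc p) + 2 ^ mfun (enc p) * enc w)))"

lemma Mach_code:
  assumes "length v = m"
  shows "Mach U (replicate m True @ False # v @ q) = map_option (\<lambda>w. v @ w) (U q v)"
  using code_facts[OF assms, of q] assms
  by (auto simp: Mach_def enc_append[symmetric] split: option.split)

lemma Mach_computable:
  assumes "computable2 U"
  shows "computable1 (Mach U)"
proof -
  obtain g where g: "\<forall>p v y. eval g [enc p, enc v] y \<longleftrightarrow> (\<exists>u. U p v = Some u \<and> y = enc u)"
    using assms unfolding computable2_def by blast
  have g': "eval g [a, b] y \<longleftrightarrow> (\<exists>u. U (dec a) (dec b) = Some u \<and> y = enc u)" for a b y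
    using g[rule_format, of "dec a" "dec b" y] by simp
  have inner: "eval (Cn g [QN, VN]) [n] b \<longleftrightarrow> eval g [qnf n, vnf n] b" for n b
  proof -
    have "eval QN [n] a \<longleftrightarrow> a = qnf n" for a using totD[OF tot_QN, of "[n]"] by simp
    moreover have "eval VN [n] a \<longleftrightarrow> a = vnf n" for a using totD[OF tot_VN, of "[n]"] by simp
    ultimately show ?thesis unfolding eval_Cn2 by auto
  qed
  have "eval (Cn OUT [Id 0, Cn g [QN, VN]]) [enc p] y \<longleftrightarrow> (\<exists>u. Mach U p = Some u \<and> y = enc u)" for p y
  proof -
    have "eval (Cn OUT [Id 0, Cn g [QN, VN]]) [enc p] y \<longleftrightarrow>
      (\<exists>b. eval g [qnf (enc p), vnf (enc p)] b \<and> y = vnf (enc p) + 2 ^ mfun (enc p) * b)"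
      unfolding eval_Cn2[of OUT "Id 0" "Cn g [QN, VN]"] inner using totD[OF tot_OUT, of "[a, b]" for a b] by auto
    also have "\<dots> \<longleftrightarrow> (\<exists>u. Mach U p = Some u \<and> y = enc u)"
      unfolding g' Mach_def by (auto split: option.split)
    finally show ?thesis .
  qed
  then show ?thesis unfolding computable1_def by blast
qed

lemma seg_len: "length (seg x 1 n) = n" by (simp add: seg_def)

lemma seg_app: "n0 \<le> n1 \<Longrightarrow> seg x 1 n0 @ seg x (n0 + 1) n1 = seg x 1 n1"
  unfolding seg_def map_append[symmetric]
  using upt_add_eq_append[of 1 "Suc n0" "n1 - n0"] by simp

lemma main:
  assumes u0: "universal1 U0" and u: "universal2 U" and rate: "has_rate U0 x \<tau>"
    and \<sigma>: "\<sigma> > 0" and k: "k \<ge> 2" and kk: "(\<tau> - \<sigma>) * real k \<ge> 2"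
  shows "\<forall>\<^sub>F n0 in sequentially. real (KCond U (seg x (n0 + 1) (k * n0)) (seg x 1 n0)) > \<sigma> * real (k * n0 - n0)"
proof -
  obtain c where c: "\<forall>p u. Mach U p = Some u \<longrightarrow> (\<exists>q. U0 q = Some u \<and> length q \<le> length p + c)"
    using u0 Mach_computable u unfolding universal1_def universal2_def by blast
  obtain N where N: "\<forall>n\<ge>N. \<tau> * real n \<le> real (KC U0 (seg x 1 n))"
    using rate unfolding has_rate_def eventually_sequentially by blast
  have idc: "computable2 (\<lambda>p v. Some p)"
    unfolding computable2_def by (intro exI[of _ "Id 0"]) simp
  have ex: "\<exists>q. U q v = Some w" for v w
    using u idc unfolding universal2_def by fast
  show ?thesis unfolding eventually_sequentially
  proof (intro exI[of _ "N + nat \<lceil>(real c + 2) / \<sigma>\<rceil> + 1"] allI impI)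
    fix n0 assume n0: "N + nat \<lceil>(real c + 2) / \<sigma>\<rceil> + 1 \<le> n0"
    define v where "v = seg x 1 n0"
    define w where "w = seg x (n0 + 1) (k * n0)"
    define K where "K = KCond U w v"
    show "real (KCond U (seg x (n0 + 1) (k * n0)) (seg x 1 n0)) > \<sigma> * real (k * n0 - n0)"
    proof (rule ccontr)
      assume "\<not> ?thesis"
      then have Kle: "real K \<le> \<sigma> * real (k * n0 - n0)" unfolding K_def v_def w_def by simp
      have "\<exists>n p. length p = n \<and> U p v = Some w" using ex[of v w] by blast
      then have "\<exists>p. length p = (LEAST n. \<exists>p. length p = n \<and> U p v = Some w) \<and> U p v = Some w"
        by (rule LeastI_ex)
      then obtain p0 where p0: "length p0 = K" "U p0 v = Some w"
        unfolding K_def KCond_def by blast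
      have lv: "length v = n0" unfolding v_def by (rule seg_len)
      have kn: "n0 \<le> k * n0" using k by simp
      have vw: "v @ w = seg x 1 (k * n0)" unfolding v_def w_def by (rule seg_app[OF kn])
      have "Mach U (replicate n0 True @ False # v @ p0) = Some (v @ w)"
        using Mach_code[OF lv] p0 by simp
      then obtain q where q: "U0 q = Some (seg x 1 (k * n0))"
        "length q \<le> length (replicate n0 True @ False # v @ p0) + c"
        using c vw by metis
      have lq: "length q \<le> 2 * n0 + 1 + K + c" using q(2) lv p0(1) by simp
      have "KC U0 (seg x 1 (k * n0)) \<le> length q"
        unfolding KC_def using q(1) by (intro Least_le) blast
      moreover have "\<tau> * real (k * n0) \<le> real (KC U0 (seg x 1 (k * n0)))"
      proof -
        have "N \<le> k * n0" using n0 kn by linarith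
        then show ?thesis using N by blast
      qed
      ultimately have A: "\<tau> * (real k * real n0) \<le> 2 * real n0 + 1 + real K + real c"
        using lq by (simp add: of_nat_mult)
      have B: "real (k * n0 - n0) = real k * real n0 - real n0"
        using kn by (simp add: of_nat_diff)
      have "(real c + 2) / \<sigma> \<le> real n0"
        using n0 by linarith
      then have C: "real c + 2 \<le> \<sigma> * real n0" using \<sigma> by (simp add: field_simps)
      have D: "(\<tau> - \<sigma>) * real k * real n0 \<ge> 2 * real n0"
        using mult_right_mono[OF kk, of "real n0"] by simp
      have E: "\<sigma> * real (k * n0 - n0) = \<sigma> * (real k * real n0) - \<sigma> * real n0"
        using B by (simp add: right_diff_distrib)
      have D': "2 * real n0 + \<sigma> * (real k * real n0) \<le> \<tau> * (real k * real n0)"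
        using D by (simp add: algebra_simps)
      show False using A C D' E Kle by linarith
    qed
  qed
qed

definition "BD = Cn MULT [Id 2, Id 4]"
definition "KF = Cn S [Cn ADD [BD, BD]]"
definition "FF = Cn MULT [Id 0, KF]"

lemma tot_FF: "tot 5 FF (\<lambda>xs. xs!0 * (2 * (xs!2 * xs!4) + 1))"
proof -
  have bd: "tot 5 BD (\<lambda>xs. xs!2 * xs!4)" unfolding BD_def
    by (rule tot_Cn[OF tot_MULT, where hs="[\<lambda>xs. xs!2, \<lambda>xs. xs!4]"]) (auto simp: tot_Id)
  have ad: "tot 5 (Cn ADD [BD, BD]) (\<lambda>xs. xs!2 * xs!4 + xs!2 * xs!4)"
    by (rule tot_Cn[OF tot_ADD, where hs="[\<lambda>xs. xs!2 * xs!4, \<lambda>xs. xs!2 * xs!4]"]) (auto simp: bd)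
  have kf: "tot 5 KF (\<lambda>xs. 2 * (xs!2 * xs!4) + 1)" unfolding KF_def
    by (rule tot_Cn[OF tot_S, where hs="[\<lambda>xs. xs!2 * xs!4 + xs!2 * xs!4]"]) (auto simp: ad[simplified])
  show ?thesis unfolding FF_def
    by (rule tot_Cn[OF tot_MULT, where hs="[\<lambda>xs. xs!0, \<lambda>xs. 2 * (xs!2 * xs!4) + 1]"]) (auto simp: tot_Id kf[simplified])
qed

theorem lemma4p1:
  fixes U0 :: "bool list \<Rightarrow> bool list option"
    and U :: "bool list \<Rightarrow> bool list \<Rightarrow> bool list option"
  assumes "universal1 U0" and "universal2 U"
  shows "(\<forall>x \<tau> \<sigma>. \<tau> > 0 \<and> has_rate U0 x \<tau> \<and> 0 < \<sigma> \<and> \<sigma> < \<tau> \<longrightarrow>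
            (\<forall>\<^sub>F n0 in sequentially. \<exists>n1>n0.
               real (KCond U (seg x (n0 + 1) n1) (seg x 1 n0)) > \<sigma> * real (n1 - n0)))
       \<and> (\<exists>F::recf. \<forall>x a b c d.
            b > 0 \<and> d > 0 \<and> 0 < real c / real d \<and> real c / real d < real a / real b
            \<and> has_rate U0 x (real a / real b) \<longrightarrow>
            (\<forall>\<^sub>F n0 in sequentially. \<exists>n1. eval F [n0, a, b, c, d] n1 \<and> n1 > n0 \<and>
               real (KCond U (seg x (n0 + 1) n1) (seg x 1 n0)) > real c / real d * real (n1 - n0)))"
proof (intro conjI allI impI)
  fix x \<tau> \<sigma> assume h: "\<tau> > 0 \<and> has_rate U0 x \<tau> \<and> 0 < \<sigma> \<and> \<sigma> < \<tau>"
  define k where "k = nat \<lceil>2 / (\<tau> - \<sigma>)\<rceil> + 2"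
  have k2: "k \<ge> 2" unfolding k_def by simp
  have "2 / (\<tau> - \<sigma>) \<le> real k" unfolding k_def by linarith
  then have kk: "(\<tau> - \<sigma>) * real k \<ge> 2" using h by (simp add: field_simps)
  have ev: "\<forall>\<^sub>F n0 in sequentially. real (KCond U (seg x (n0 + 1) (k * n0)) (seg x 1 n0)) > \<sigma> * real (k * n0 - n0)"
    using main[OF assms h[THEN conjunct2, THEN conjunct1] _ k2 kk] h by blast
  have ev1: "\<forall>\<^sub>F n0 in sequentially. n0 \<ge> (1::nat)" by (rule eventually_ge_at_top)
  show "\<forall>\<^sub>F n0 in sequentially. \<exists>n1>n0. real (KCond U (seg x (n0 + 1) n1) (seg x 1 n0)) > \<sigma> * real (n1 - n0)"
    using eventually_conj[OF ev ev1]
  proof (rule eventually_mono)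
    fix n0 :: nat assume "real (KCond U (seg x (n0 + 1) (k * n0)) (seg x 1 n0)) > \<sigma> * real (k * n0 - n0) \<and> n0 \<ge> 1"
    moreover have "k * n0 > n0" using k2 calculation by (metis less_le_trans mult_le_mono1 mult_1 one_less_numeral_iff semiring_norm(76) le_less_trans lessI less_imp_le_nat mult_less_mono1 not_less zero_less_one Suc_le_eq)
    ultimately show "\<exists>n1>n0. real (KCond U (seg x (n0 + 1) n1) (seg x 1 n0)) > \<sigma> * real (n1 - n0)"
      by blast
  qed
next
  show "\<exists>F::recf. \<forall>x a b c d.
            b > 0 \<and> d > 0 \<and> 0 < real c / real d \<and> real c / real d < real a / real b
            \<and> has_rate U0 x (real a / real b) \<longrightarrow>
            (\<forall>\<^sub>F n0 in sequentially. \<exists>n1. eval F [n0, a, b, c, d] n1 \<and> n1 > n0 \<and>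
               real (KCond U (seg x (n0 + 1) n1) (seg x 1 n0)) > real c / real d * real (n1 - n0))"
  proof (intro exI[of _ FF] allI impI)
    fix x and a b c d :: nat
    assume h: "b > 0 \<and> d > 0 \<and> 0 < real c / real d \<and> real c / real d < real a / real b
            \<and> has_rate U0 x (real a / real b)"
    define k where "k = 2 * (b * d) + 1"
    have k2: "k \<ge> 2" unfolding k_def using h by simp
    have bd: "real b > 0" "real d > 0" using h by auto
    have "real c * real b < real a * real d" using h bd by (simp add: field_simps)
    then have "c * b < a * d" by (metis of_nat_less_iff of_nat_mult)
    then have X: "real a * real d - real c * real b \<ge> 1"
      by (metis of_nat_mult of_nat_less_iff of_nat_1 of_nat_add Suc_le_eq add.commute plus_1_eq_Suc
          le_diff_eq of_nat_le_iff)
    have eq: "(real a / real b - real c / real d) * real k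
        = (real a * real d - real c * real b) * real k / (real b * real d)"
      using bd by (simp add: field_simps)
    have "2 * (real b * real d) \<le> (real a * real d - real c * real b) * real k"
    proof -
      have "2 * (real b * real d) \<le> real k" unfolding k_def by simp
      also have "\<dots> \<le> (real a * real d - real c * real b) * real k"
        using mult_right_mono[OF X, of "real k"] by simp
      finally show ?thesis .
    qed
    then have kk: "(real a / real b - real c / real d) * real k \<ge> 2"
      unfolding eq using bd by (simp add: pos_le_divide_eq)
    have ev: "\<forall>\<^sub>F n0 in sequentially. real (KCond U (seg x (n0 + 1) (k * n0)) (seg x 1 n0)) > real c / real d * real (k * n0 - n0)"
      using main[OF assms _ _ k2 kk] h by auto
    have ev1: "\<forall>\<^sub>F n0 in sequentially. n0 \<ge> (1::nat)" by (rule eventually_ge_at_top)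
    show "\<forall>\<^sub>F n0 in sequentially. \<exists>n1. eval FF [n0, a, b, c, d] n1 \<and> n1 > n0 \<and>
               real (KCond U (seg x (n0 + 1) n1) (seg x 1 n0)) > real c / real d * real (n1 - n0)"
      using eventually_conj[OF ev ev1]
    proof (rule eventually_mono)
      fix n0 :: nat assume A: "real (KCond U (seg x (n0 + 1) (k * n0)) (seg x 1 n0)) > real c / real d * real (k * n0 - n0) \<and> n0 \<ge> 1"
      have gt: "k * n0 > n0" using k2 A by (simp add: k_def)
      have "eval FF [n0, a, b, c, d] (k * n0)"
        using totD[OF tot_FF, of "[n0, a, b, c, d]" "k * n0"] by (simp add: k_def)
      then show "\<exists>n1. eval FF [n0, a, b, c, d] n1 \<and> n1 > n0 \<and>
               real (KCond U (seg x (n0 + 1) n1) (seg x 1 n0)) > real c / real d * real (n1 - n0)"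
        using A gt by blast
    qed
  qed
qed

end
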